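(* Let $r \ge 2$ be an integer. There is a constant $c = c(r) > 0$, depending only on $r$, such that for all integers $n \ge r$, \[\overrightarrow{\Gamma}_{r-1}(H(n,r)) \ge c\,(\ln n)^{\frac{1}{r-1}}.\]
   Context: $H(n,r)$ denotes the complete $r$-uniform hypergraph on $n$ vertices (every $r$-subset of the $n$-element vertex set is an edge). An orientation $D$ of an $r$-uniform hypergraph $H=(V,\mathcal{E})$ assigns to each edge $E\in\mathcal{E}$ exactly one of the $r!$ linear orderings of its elements. For $1\le p\le r-1$, a set $S\subseteq V$ is a directed $p$-dominating set of $D$ if for every vertex $u\in V\setminus S$ there is an edge $E\in\mathcal{E}$ with $u\in E$ whose first $p$ vertices (in the ordering given by $D$) all lie in $S$. $\overrightarrow{\gamma}_p(D)$ is the minimum cardinality of a directed $p$-dominating set of $D$, and $\overrightarrow{\Gamma}_p(H)$ is the maximum of $\overrightarrow{\gamma}_p(D)$ over all orientations $D$ of $H$. $\ln$ is the natural logarithm. *)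

theory Defs
  imports "HOL-Analysis.Analysis"
begin

definition complete_hyp_edges :: "nat \<Rightarrow> nat \<Rightarrow> nat set set" where
  "complete_hyp_edges n r = {E. E \<subseteq> {0..<n} \<and> card E = r}"

text \<open>An orientation assigns to each edge a linear ordering of its elements,
represented as a distinct list enumerating the edge.\<close>

definition is_orientation :: "'a set set \<Rightarrow> ('a set \<Rightarrow> 'a list) \<Rightarrow> bool" where
  "is_orientation Es D \<longleftrightarrow> (\<forall>E\<in>Es. distinct (D E) \<and> set (D E) = E)"

definition is_dir_dom_set ::
  "nat \<Rightarrow> 'a set \<Rightarrow> 'a set set \<Rightarrow> ('a set \<Rightarrow> 'a list) \<Rightarrow> 'a set \<Rightarrow> bool" where
  "is_dir_dom_set p V Es D S \<longleftrightarrow> S \<subseteq> V \<and>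
     (\<forall>u\<in>V - S. \<exists>E\<in>Es. u \<in> E \<and> set (take p (D E)) \<subseteq> S)"

definition dir_dom_number ::
  "nat \<Rightarrow> 'a set \<Rightarrow> 'a set set \<Rightarrow> ('a set \<Rightarrow> 'a list) \<Rightarrow> nat" where
  "dir_dom_number p V Es D = (LEAST k. \<exists>S. is_dir_dom_set p V Es D S \<and> card S = k)"

definition upper_dir_dom_number :: "nat \<Rightarrow> 'a set \<Rightarrow> 'a set set \<Rightarrow> nat" where
  "upper_dir_dom_number p V Es =
     Max {dir_dom_number p V Es D | D. is_orientation Es D}"

end

theory Submission
  imports Defs "HOL-Real_Asymp.Real_Asymp"
begin


lemma card_indep:
  fixes Q :: "'u \<Rightarrow> 'a set" and Phi :: "'u \<Rightarrow> 'a set \<Rightarrow> bool"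
  assumes "finite U" "finite P" "\<forall>u\<in>U. Q u \<subseteq> P"
    "\<forall>u\<in>U. \<forall>v\<in>U. u \<noteq> v \<longrightarrow> Q u \<inter> Q v = {}"
  shows "card {A. A \<subseteq> P \<and> (\<forall>u\<in>U. Phi u (A \<inter> Q u))} * 2^(\<Sum>u\<in>U. card (Q u))
         = 2^card P * (\<Prod>u\<in>U. card {B. B \<subseteq> Q u \<and> Phi u B})"
  using assms
proof (induction U arbitrary: P rule: finite_induct)
  case empty
  have "{A. A \<subseteq> P} = Pow P" by auto
  then show ?case using empty by (simp add: card_Pow)
next
  case (insert u U)
  define SB where "SB = {B. B \<subseteq> Q u \<and> Phi u B}"
  define SC where "SC = {C. C \<subseteq> P - Q u \<and> (\<forall>v\<in>U. Phi v (C \<inter> Q v))}"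
  have Qu: "Q u \<subseteq> P" using insert.prems(2) by simp
  have dis: "\<forall>v\<in>U. Q u \<inter> Q v = {}"
  proof
    fix v assume v: "v \<in> U"
    then have "u \<noteq> v" using insert.hyps(2) by auto
    then show "Q u \<inter> Q v = {}" using insert.prems(3) v by simp
  qed
  have Qv: "\<forall>v\<in>U. Q v \<subseteq> P - Q u"
    using dis insert.prems(2) by blast
  have eq: "{A. A \<subseteq> P \<and> (\<forall>v\<in>insert u U. Phi v (A \<inter> Q v))} = (\<lambda>(B,C). B \<union> C) ` (SB \<times> SC)"
  proof (rule set_eqI, rule iffI)
    fix A assume A: "A \<in> {A. A \<subseteq> P \<and> (\<forall>v\<in>insert u U. Phi v (A \<inter> Q v))}"
    have "A \<inter> Q u \<in> SB" using A by (auto simp: SB_def)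
    moreover have "A - Q u \<in> SC"
    proof -
      have "(A - Q u) \<inter> Q v = A \<inter> Q v" if "v \<in> U" for v using dis that by blast
      then show ?thesis using A by (auto simp: SC_def)
    qed
    moreover have "A = (A \<inter> Q u) \<union> (A - Q u)" by blast
    ultimately show "A \<in> (\<lambda>(B,C). B \<union> C) ` (SB \<times> SC)" by blast
  next
    fix A assume "A \<in> (\<lambda>(B,C). B \<union> C) ` (SB \<times> SC)"
    then obtain B C where A: "A = B \<union> C" "B \<in> SB" "C \<in> SC" by auto
    have "(B \<union> C) \<inter> Q u = B" using A by (auto simp: SB_def SC_def)
    moreover have "(B \<union> C) \<inter> Q v = C \<inter> Q v" if "v \<in> U" for v
      using A dis that by (auto simp: SB_def)
    ultimately show "A \<in> {A. A \<subseteq> P \<and> (\<forall>v\<in>insert u U. Phi v (A \<inter> Q v))}"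
      using A Qu by (auto simp: SB_def SC_def)
  qed
  have inj: "inj_on (\<lambda>(B,C). B \<union> C) (SB \<times> SC)"
  proof (rule inj_onI, clarsimp)
    fix B C B' C' assume h: "B \<in> SB" "C \<in> SC" "B' \<in> SB" "C' \<in> SC" "B \<union> C = B' \<union> C'"
    have "B = (B \<union> C) \<inter> Q u" "B' = (B' \<union> C') \<inter> Q u" "C = (B \<union> C) - Q u" "C' = (B' \<union> C') - Q u"
      using h by (auto simp: SB_def SC_def)
    then show "B = B' \<and> C = C'" using h(5) by metis
  qed
  have c1: "card {A. A \<subseteq> P \<and> (\<forall>v\<in>insert u U. Phi v (A \<inter> Q v))} = card SB * card SC"
    unfolding eq by (subst card_image[OF inj]) (simp add: card_cartesian_product)
  have IH: "card SC * 2^(\<Sum>v\<in>U. card (Q v)) = 2^card (P - Q u) * (\<Prod>v\<in>U. card {B. B \<subseteq> Q v \<and> Phi v B})"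
  proof -
    have "\<forall>v\<in>U. \<forall>w\<in>U. v \<noteq> w \<longrightarrow> Q v \<inter> Q w = {}" using insert.prems(3) by simp
    moreover have "finite (P - Q u)" using insert.prems(1) by simp
    ultimately show ?thesis unfolding SC_def using insert.IH[of "P - Q u"] Qv by simp
  qed
  have cP: "card (P - Q u) = card P - card (Q u)"
    by (rule card_Diff_subset[OF finite_subset[OF Qu insert.prems(1)] Qu])
  have le: "card (Q u) \<le> card P" by (rule card_mono[OF insert.prems(1) Qu])
  have pw: "(2::nat)^(card P - card (Q u)) * 2^card (Q u) = 2^card P"
    using le by (simp add: power_add[symmetric])
  have sm: "(\<Sum>v\<in>insert u U. card (Q v)) = card (Q u) + (\<Sum>v\<in>U. card (Q v))"
    using insert.hyps by simp
  have pr: "(\<Prod>v\<in>insert u U. card {B. B \<subseteq> Q v \<and> Phi v B}) = card SB * (\<Prod>v\<in>U. card {B. B \<subseteq> Q v \<and> Phi v B})"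
    using insert.hyps by (simp add: SB_def)
  define X where "X = (\<Prod>v\<in>U. card {B. B \<subseteq> Q v \<and> Phi v B})"
  define s where "s = (\<Sum>v\<in>U. card (Q v))"
  have "card SB * card SC * 2 ^ (card (Q u) + s) = card SB * (card SC * 2^s) * 2^card (Q u)"
    by (simp add: power_add)
  also have "\<dots> = card SB * X * (2^(card P - card (Q u)) * 2^card (Q u))"
    using IH cP by (simp add: X_def s_def)
  also have "\<dots> = 2^card P * (card SB * X)" using pw by simp
  finally show ?case unfolding c1 sm pr X_def s_def .
qed



definition bt :: "(nat\<times>nat) set \<Rightarrow> nat \<Rightarrow> nat \<Rightarrow> bool" where
  "bt A i j = ((i < j \<and> (i,j) \<in> A) \<or> (j < i \<and> (j,i) \<notin> A))"

lemma bt_anti: "\<not> (bt A x y \<and> bt A y x)"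
  unfolding bt_def by auto

lemma bt_char:
  assumes "u \<notin> X"
  shows "(\<forall>x\<in>X. bt A u x) \<longleftrightarrow>
     A \<inter> ((\<lambda>x. (min u x, max u x)) ` X) = {(u,x) | x. x \<in> X \<and> u < x}"
proof
  assume h: "\<forall>x\<in>X. bt A u x"
  show "A \<inter> ((\<lambda>x. (min u x, max u x)) ` X) = {(u,x) | x. x \<in> X \<and> u < x}"
  proof (rule set_eqI, rule iffI)
    fix z assume z: "z \<in> A \<inter> ((\<lambda>x. (min u x, max u x)) ` X)"
    then obtain x where x: "x \<in> X" "z = (min u x, max u x)" by auto
    have "u \<noteq> x" using assms x by auto
    then show "z \<in> {(u,x) | x. x \<in> X \<and> u < x}"
      using h x z unfolding bt_def by (cases "u < x") (auto simp: min_def max_def)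
  next
    fix z assume "z \<in> {(u,x) | x. x \<in> X \<and> u < x}"
    then obtain x where x: "x \<in> X" "u < x" "z = (u,x)" by auto
    then show "z \<in> A \<inter> ((\<lambda>x. (min u x, max u x)) ` X)"
      using h unfolding bt_def by force
  qed
next
  assume h: "A \<inter> ((\<lambda>x. (min u x, max u x)) ` X) = {(u,x) | x. x \<in> X \<and> u < x}"
  show "\<forall>x\<in>X. bt A u x"
  proof
    fix x assume x: "x \<in> X"
    have ne: "u \<noteq> x" using assms x by auto
    show "bt A u x"
    proof (cases "u < x")
      case True
      then have "(u,x) \<in> {(u,x) | x. x \<in> X \<and> u < x}" using x by auto
      then show ?thesis using h True unfolding bt_def by blast
    next
      case False
      then have xu: "x < u" using ne by simp
      have "(x,u) \<notin> A"
      proof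
        assume "(x,u) \<in> A"
        moreover have "(x,u) \<in> (\<lambda>x. (min u x, max u x)) ` X"
          using x xu by (auto simp: min_def max_def intro!: image_eqI[of _ _ x])
        ultimately have "(x,u) \<in> {(u,x) | x. x \<in> X \<and> u < x}" using h by blast
        then show False using xu by auto
      qed
      then show ?thesis using xu unfolding bt_def by simp
    qed
  qed
qed

lemma tourn_exists:
  assumes kn: "k \<le> n" and num: "real (n choose k) * (1 - 1/2^k)^(n-k) < 1"
  shows "\<exists>A. \<forall>X. X \<subseteq> {0..<n} \<longrightarrow> card X = k \<longrightarrow> (\<exists>u\<in>{0..<n} - X. \<forall>x\<in>X. bt A u x)"
proof -
  define V where "V = {0..<n}"
  define P where "P = {(i,j). i < j \<and> j < n}"
  have finP: "finite P"
  proof -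
    have "P \<subseteq> {0..<n} \<times> {0..<n}" by (auto simp: P_def)
    then show ?thesis by (rule finite_subset) simp
  qed
  define Qf where "Qf X u = (\<lambda>x. (min u x, max u x)) ` X" for X and u :: nat
  define W where "W X u = {(u,x) | x. x \<in> X \<and> u < x}" for X and u :: nat
  define Bad where "Bad X = {A. A \<subseteq> P \<and> (\<forall>u\<in>V-X. (\<lambda>u B. B \<noteq> W X u) u (A \<inter> Qf X u))}" for X
  define Fam where "Fam = {X. X \<subseteq> V \<and> card X = k}"
  have cardBad: "real (card (Bad X)) = 2^card P * (1 - 1/2^k)^(n-k)" if X: "X \<in> Fam" for X
  proof -
    have XV: "X \<subseteq> V" and cX: "card X = k" using X by (auto simp: Fam_def)
    have finX: "finite X" using XV V_def finite_subset by blast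
    have QP: "\<forall>u\<in>V-X. Qf X u \<subseteq> P"
    proof (intro ballI subsetI)
      fix u z assume u: "u \<in> V - X" and z: "z \<in> Qf X u"
      then obtain x where x: "x \<in> X" "z = (min u x, max u x)" by (auto simp: Qf_def)
      have "u \<noteq> x" "u < n" "x < n" using u x XV by (auto simp: V_def)
      then show "z \<in> P" using x by (auto simp: P_def min_def max_def)
    qed
    have disj: "\<forall>u\<in>V-X. \<forall>v\<in>V-X. u \<noteq> v \<longrightarrow> Qf X u \<inter> Qf X v = {}"
    proof (intro ballI impI)
      fix u v assume u: "u \<in> V - X" and v: "v \<in> V - X" and uv: "u \<noteq> v"
      show "Qf X u \<inter> Qf X v = {}"
      proof (rule ccontr)
        assume "Qf X u \<inter> Qf X v \<noteq> {}"
        then obtain x y where xy: "x \<in> X" "y \<in> X" "(min u x, max u x) = (min v y, max v y)"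
          by (auto simp: Qf_def)
        then show False using u v uv by (auto simp: min_def max_def split: if_splits)
      qed
    qed
    have cQ: "card (Qf X u) = k" if u: "u \<in> V - X" for u
    proof -
      have "inj_on (\<lambda>x. (min u x, max u x)) X"
        using u by (auto simp: inj_on_def min_def max_def split: if_splits)
      then show ?thesis using cX by (simp add: Qf_def card_image)
    qed
    have cB: "card {B. B \<subseteq> Qf X u \<and> B \<noteq> W X u} = 2^k - 1" if u: "u \<in> V - X" for u
    proof -
      have WQ: "W X u \<subseteq> Qf X u"
      proof
        fix z assume "z \<in> W X u"
        then obtain x where "x \<in> X" "u < x" "z = (u,x)" by (auto simp: W_def)
        then show "z \<in> Qf X u" unfolding Qf_def by (intro image_eqI[of _ _ x]) auto
      qed
      have finQ: "finite (Qf X u)" using finX by (simp add: Qf_def)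
      have "{B. B \<subseteq> Qf X u \<and> B \<noteq> W X u} = Pow (Qf X u) - {W X u}" by auto
      then show ?thesis using WQ finQ cQ[OF u] by (simp add: card_Pow)
    qed
    have cVX: "card (V - X) = n - k" using XV cX finX by (simp add: card_Diff_subset V_def)
    have main: "card (Bad X) * 2^(\<Sum>u\<in>V-X. card (Qf X u)) =
        2^card P * (\<Prod>u\<in>V-X. card {B. B \<subseteq> Qf X u \<and> (\<lambda>u B. B \<noteq> W X u) u B})"
      unfolding Bad_def by (rule card_indep) (use finP QP disj V_def in auto)
    have s: "(\<Sum>u\<in>V-X. card (Qf X u)) = (n-k) * k" using cQ cVX by simp
    have p: "(\<Prod>u\<in>V-X. card {B. B \<subseteq> Qf X u \<and> (\<lambda>u B. B \<noteq> W X u) u B}) = (2^k - 1)^(n-k)"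
      using cB cVX by simp
    have nat_eq: "card (Bad X) * 2^((n-k)*k) = 2^card P * (2^k - 1)^(n-k)"
      using main s p by simp
    have "real (card (Bad X)) * 2^((n-k)*k) = 2^card P * (2^k - 1)^(n-k)"
    proof -
      have "real (card (Bad X) * 2^((n-k)*k)) = real (2^card P * (2^k - 1)^(n-k))"
        using nat_eq by simp
      moreover have "real ((2::nat)^k - 1) = 2^k - 1"
        by (simp add: of_nat_diff)
      ultimately show ?thesis by simp
    qed
    moreover have "(2::real)^((n-k)*k) = (2^k)^(n-k)"
      by (simp add: power_mult mult.commute)
    ultimately have "real (card (Bad X)) = 2^card P * ((2^k - 1)^(n-k) / (2^k)^(n-k))"
      by (simp add: field_simps)
    also have "(2^k - 1)^(n-k) / (2^k)^(n-k) = (1 - 1/(2::real)^k)^(n-k)"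
      by (simp add: power_divide[symmetric] diff_divide_distrib)
    finally show ?thesis .
  qed
  have finFam: "finite Fam" unfolding Fam_def V_def by simp
  have cFam: "card Fam = n choose k"
    unfolding Fam_def V_def using n_subsets[of "{0..<n}" k] by simp
  have "real (card (\<Union>X\<in>Fam. Bad X)) \<le> real (\<Sum>X\<in>Fam. card (Bad X))"
    using card_UN_le[OF finFam] by (simp only: of_nat_le_iff)
  also have "\<dots> = (\<Sum>X\<in>Fam. 2^card P * (1 - 1/2^k)^(n-k))"
    by (simp only: of_nat_sum) (rule sum.cong, auto simp: cardBad)
  also have "\<dots> = real (n choose k) * (1 - 1/2^k)^(n-k) * 2^card P"
    using cFam by simp
  also have "\<dots> < 2^card P" using num by simp
  finally have lt: "card (\<Union>X\<in>Fam. Bad X) < card (Pow P)"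
    by (simp add: card_Pow finP)
  have "\<not> Pow P \<subseteq> (\<Union>X\<in>Fam. Bad X)"
  proof
    assume "Pow P \<subseteq> (\<Union>X\<in>Fam. Bad X)"
    moreover have "finite (\<Union>X\<in>Fam. Bad X)"
      using finFam finP by (auto simp: Bad_def)
    ultimately have "card (Pow P) \<le> card (\<Union>X\<in>Fam. Bad X)" by (rule card_mono[rotated])
    then show False using lt by simp
  qed
  then obtain A where A: "A \<subseteq> P" "\<forall>X\<in>Fam. A \<notin> Bad X" by blast
  show ?thesis
  proof (intro exI allI impI)
    fix X assume XV: "X \<subseteq> {0..<n}" and cX: "card X = k"
    then have "X \<in> Fam" by (simp add: Fam_def V_def)
    then have "A \<notin> Bad X" using A by blast
    then obtain u where u: "u \<in> V - X" "A \<inter> Qf X u = W X u" using A(1) by (auto simp: Bad_def)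
    then have "\<forall>x\<in>X. bt A u x" using bt_char[of u X A] by (simp add: Qf_def W_def)
    then show "\<exists>u\<in>{0..<n} - X. \<forall>x\<in>X. bt A u x" using u V_def by blast
  qed
qed



definition src :: "(nat\<Rightarrow>nat\<Rightarrow>bool) \<Rightarrow> nat set \<Rightarrow> nat" where
  "src b E = (SOME s. s \<in> E \<and> (\<forall>x\<in>E-{s}. b s x))"

definition ori :: "(nat\<Rightarrow>nat\<Rightarrow>bool) \<Rightarrow> nat set \<Rightarrow> nat list" where
  "ori b E = (if \<exists>s\<in>E. \<forall>x\<in>E-{s}. b s x then src b E # sorted_list_of_set (E - {src b E})
              else sorted_list_of_set E)"

lemma ori_props:
  assumes "finite E"
  shows "distinct (ori b E) \<and> set (ori b E) = E"
proof (cases "\<exists>s\<in>E. \<forall>x\<in>E-{s}. b s x")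
  case True
  then have ex: "\<exists>s. s \<in> E \<and> (\<forall>x\<in>E-{s}. b s x)" by blast
  have "src b E \<in> E" unfolding src_def using someI_ex[OF ex] by blast
  then show ?thesis using True assms by (auto simp: ori_def)
next
  case False
  then show ?thesis using assms by (auto simp: ori_def)
qed

lemma ori_hd:
  assumes anti: "\<And>x y. \<not> (b x y \<and> b y x)" and u: "u \<in> E" and src: "\<forall>x\<in>E-{u}. b u x"
  shows "hd (ori b E) = u"
proof -
  have ex: "\<exists>s. s \<in> E \<and> (\<forall>x\<in>E-{s}. b s x)" using u src by blast
  have s: "src b E \<in> E \<and> (\<forall>x\<in>E-{src b E}. b (src b E) x)"
    unfolding src_def using someI_ex[OF ex] .
  have "src b E = u"
  proof (rule ccontr)
    assume ne: "src b E \<noteq> u"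
    then have "b (src b E) u" using s u by auto
    moreover have "b u (src b E)" using src s ne by auto
    ultimately show False using anti by blast
  qed
  then show ?thesis using u src by (auto simp: ori_def)
qed

lemma list_last_lemma:
  assumes "length l = Suc p" "set (take p l) \<subseteq> S" "u \<in> set l" "u \<notin> S"
  shows "set l - {u} \<subseteq> S"
proof -
  have l: "l = take p l @ drop p l" by simp
  have "length (drop p l) = 1" using assms(1) by simp
  then obtain w where w: "drop p l = [w]" by (metis One_nat_def length_0_conv length_Suc_conv)
  have "u \<notin> set (take p l)" using assms by auto
  have sl: "set l = set (take p l) \<union> {w}" using w by (metis l set_append empty_set list.simps(15))
  then have "u = w" using assms(3) \<open>u \<notin> set (take p l)\<close> by blast
  then show ?thesis using sl assms(2) by blast
qed

lemma dom_lower: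
  fixes b :: "nat \<Rightarrow> nat \<Rightarrow> bool"
  assumes r: "r \<ge> 2" and anti: "\<And>x y. \<not> (b x y \<and> b y x)" and kn: "k \<le> n"
    and Q: "\<And>X. X \<subseteq> {0..<n} \<Longrightarrow> card X = k \<Longrightarrow> \<exists>u\<in>{0..<n} - X. \<forall>x\<in>X. b u x"
  shows "k + 1 \<le> upper_dir_dom_number (r - 1) {0..<n} (complete_hyp_edges n r)"
proof -
  define V where "V = {0..<n::nat}"
  define Es where "Es = complete_hyp_edges n r"
  define p where "p = r - 1"
  have finE: "finite E" if "E \<in> Es" for E
    using that r by (auto simp: Es_def complete_hyp_edges_def intro: card_ge_0_finite)
  have orient: "is_orientation Es (ori b)"
    unfolding is_orientation_def using ori_props finE by blast
  have big: "card S \<ge> k + 1" if dom: "is_dir_dom_set p V Es (ori b) S" for S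
  proof (rule ccontr)
    assume "\<not> card S \<ge> k + 1"
    then have cS: "card S \<le> k" by simp
    have SV: "S \<subseteq> V" using dom by (simp add: is_dir_dom_set_def)
    have finS: "finite S" using SV V_def finite_subset by blast
    have "card (V - S) = n - card S" using SV finS by (simp add: card_Diff_subset V_def)
    then have "k - card S \<le> card (V - S)" using kn by simp
    then obtain T where T: "T \<subseteq> V - S" "card T = k - card S" "finite T"
      by (rule obtain_subset_with_card_n)
    define X where "X = S \<union> T"
    have XV: "X \<subseteq> V" using SV T by (auto simp: X_def)
    have cX: "card X = k" unfolding X_def using T finS cS
      by (subst card_Un_disjoint) auto
    obtain u where u: "u \<in> V - X" "\<forall>x\<in>X. b u x" using Q[of X] XV cX V_def by auto
    then have "u \<in> V - S" by (auto simp: X_def)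
    then obtain E where E: "E \<in> Es" "u \<in> E" "set (take p (ori b E)) \<subseteq> S"
      using dom unfolding is_dir_dom_set_def by blast
    define l where "l = ori b E"
    have dl: "distinct l" "set l = E" using ori_props[OF finE[OF E(1)]] by (auto simp: l_def)
    have "card E = r" using E(1) by (simp add: Es_def complete_hyp_edges_def)
    then have len: "length l = Suc p" using dl distinct_card[of l] r p_def by simp
    have uS: "u \<notin> S" using u by (auto simp: X_def)
    have "E - {u} \<subseteq> S" using list_last_lemma[OF len] E(3) dl E(2) uS l_def by auto
    then have "\<forall>x\<in>E-{u}. b u x" using u(2) by (auto simp: X_def)
    then have "hd l = u" using ori_hd[OF anti E(2)] l_def by simp
    moreover have "l \<noteq> []" using len by auto
    moreover have "p > 0" using r p_def by simp
    ultimately have "u \<in> set (take p l)" by (cases l; cases p) auto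
    then show False using E(3) uS l_def by auto
  qed
  have domV: "is_dir_dom_set p V Es D V" for D by (simp add: is_dir_dom_set_def)
  have ex: "\<exists>j. \<exists>S. is_dir_dom_set p V Es (ori b) S \<and> card S = j" using domV by blast
  have "k + 1 \<le> dir_dom_number p V Es (ori b)"
    unfolding dir_dom_number_def using LeastI_ex[OF ex] big by metis
  also have "\<dots> \<le> upper_dir_dom_number p V Es"
  proof -
    have sub: "{dir_dom_number p V Es D | D. is_orientation Es D} \<subseteq> {..n}"
    proof
      fix x assume "x \<in> {dir_dom_number p V Es D | D. is_orientation Es D}"
      then obtain D where x: "x = dir_dom_number p V Es D" by auto
      have "x \<le> card V" unfolding x dir_dom_number_def
        by (rule Least_le) (use domV in blast)
      then show "x \<in> {..n}" by (simp add: V_def)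
    qed
    show ?thesis unfolding upper_dir_dom_number_def
      by (rule Max_ge) (use sub orient in \<open>auto intro: finite_subset\<close>)
  qed
  finally show ?thesis by (simp add: V_def Es_def p_def)
qed



lemma asym: "eventually (\<lambda>x::real. x powr (1/4) * (ln x)^2 + ln x < x) at_top"
  by real_asymp

lemma numeric:
  fixes n :: nat
  assumes n3: "n \<ge> 3" and X: "real n powr (1/4) * (ln (real n))^2 + ln (real n) < real n"
  defines "k \<equiv> nat \<lfloor>log 16 (real n)\<rfloor>"
  shows "k \<le> n" "real (n choose k) * (1 - 1/2^k)^(n-k) < 1" "real k + 1 > ln (real n) / ln 16"
proof -
  define y where "y = log 16 (real n)"
  have npos: "real n > 0" using n3 by simp
  have lnpos: "ln (real n) > 0" using n3 by simp
  have ln16: "ln (16::real) > 1"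
  proof -
    have "exp 1 < (16::real)" using exp_le by simp
    then have "ln (exp 1) < ln (16::real)" by (subst ln_less_cancel_iff) auto
    then show ?thesis by simp
  qed
  have y: "y = ln (real n) / ln 16" by (simp add: y_def log_def)
  have ypos: "y \<ge> 0" using y lnpos ln16 by simp
  have ky: "real k \<le> y" "real k > y - 1" using ypos unfolding k_def y_def[symmetric]
    by (auto simp: of_nat_nat)
  have yln: "y \<le> ln (real n)" using y lnpos ln16 by (simp add: divide_le_eq)
  have kln: "real k \<le> ln (real n)" using ky yln by simp
  have lnn: "ln (real n) < real n" using npos ln_less_self by blast
  show kn: "k \<le> n" using kln lnn by simp
  show "real k + 1 > ln (real n) / ln 16" using ky y by simp
  have p16: "(16::real)^k \<le> real n"
  proof -
    have "(16::real)^k = 16 powr real k" by (simp add: powr_realpow)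
    also have "\<dots> \<le> 16 powr y" using ky by (intro powr_mono) auto
    also have "\<dots> = real n" unfolding y_def using npos by simp
    finally show ?thesis .
  qed
  have p2: "(2::real)^k \<le> real n powr (1/4)"
  proof -
    have "((2::real)^k)^4 = (2^4)^k" by (metis power_mult mult.commute)
    also have "\<dots> = 16^k" by simp
    finally have "((2::real)^k)^4 = 16^k" .
    then have "((2::real)^k)^4 \<le> real n" using p16 by simp
    then have "(((2::real)^k) powr 4) \<le> real n" by (simp add: powr_realpow)
    then have "(((2::real)^k) powr 4) powr (1/4) \<le> real n powr (1/4)"
      by (intro powr_mono2) auto
    moreover have "(((2::real)^k) powr 4) powr (1/4) = 2^k" by (subst powr_powr) simp
    ultimately show ?thesis by simp
  qed
  have key: "real k * ln (real n) * 2^k + real k < real n"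
  proof -
    have "real k * ln (real n) * 2^k \<le> ln (real n) * ln (real n) * real n powr (1/4)"
      using kln p2 lnpos by (intro mult_mono) auto
    then show ?thesis using X kln by (simp add: power2_eq_square mult_ac)
  qed
  have key2: "real k * ln (real n) < (real n - real k) / 2^k"
    using key by (simp add: field_simps)
  have "real (n choose k) \<le> real n ^ k"
    using binomial_le_pow[OF kn] by (metis of_nat_le_iff of_nat_power)
  also have "\<dots> = exp (real k * ln (real n))" using npos
    by (simp add: exp_of_nat_mult)
  finally have b1: "real (n choose k) \<le> exp (real k * ln (real n))" .
  have "(1 - 1/(2::real)^k)^(n-k) \<le> (exp (- (1/2^k)))^(n-k)"
  proof (rule power_mono)
    show "1 - 1 / (2::real) ^ k \<le> exp (- (1 / 2 ^ k))"
      using exp_ge_add_one_self[of "- (1/(2::real)^k)"] by simp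
    show "0 \<le> 1 - 1 / (2::real) ^ k" by (simp add: field_simps)
  qed
  also have "\<dots> = exp (- ((real n - real k) / 2^k))"
    using kn by (simp add: exp_of_nat_mult[symmetric] of_nat_diff field_simps)
  finally have b2: "(1 - 1/(2::real)^k)^(n-k) \<le> exp (- ((real n - real k) / 2^k))" .
  have "real (n choose k) * (1 - 1/2^k)^(n-k) \<le> exp (real k * ln (real n)) * exp (- ((real n - real k) / 2^k))"
    using b1 b2 by (intro mult_mono) (auto simp: field_simps)
  also have "\<dots> = exp (real k * ln (real n) + - ((real n - real k) / 2^k))"
    by (simp only: exp_add)
  also have "\<dots> < 1" using key2 by simp
  finally show "real (n choose k) * (1 - 1/2^k)^(n-k) < 1" .
qed



theorem mainTheorem2:
  fixes r :: nat
  assumes "r \<ge> 2"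
  shows "\<exists>c::real. c > 0 \<and>
    (\<forall>n::nat. n \<ge> r \<longrightarrow>
       real (upper_dir_dom_number (r - 1) {0..<n} (complete_hyp_edges n r))
         \<ge> c * ln (real n) powr (1 / (real r - 1)))"
proof -
  have r: "r \<ge> 2" using assms .
  obtain X0 :: real where X0: "\<And>x. x \<ge> X0 \<Longrightarrow> x powr (1/4) * (ln x)^2 + ln x < x"
    using asym by (auto simp: eventually_at_top_linorder)
  define N0 where "N0 = nat \<lceil>X0\<rceil> + 16"
  define c where "c = min (1 / ln 16) (1 / real N0)"
  have ln16: "ln (16::real) > 1"
  proof -
    have "exp 1 < (16::real)" using exp_le by simp
    then have "ln (exp 1) < ln (16::real)" by (subst ln_less_cancel_iff) auto
    then show ?thesis by simp
  qed
  have N0pos: "real N0 > 0" by (simp add: N0_def)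
  have cpos: "c > 0" using ln16 N0pos by (simp add: c_def)
  show ?thesis
  proof (intro exI conjI allI impI)
    show "c > 0" by (rule cpos)
    fix n :: nat assume nr: "r \<le> n"
    define a where "a = 1 / (real r - 1)"
    have a: "0 < a" "a \<le> 1" using r by (auto simp: a_def field_simps)
    define G where "G = upper_dir_dom_number (r - 1) {0..<n} (complete_hyp_edges n r)"
    have lnpos: "ln (real n) > 0" using nr r by simp
    have "c * ln (real n) powr a \<le> real G"
    proof (cases "n \<ge> N0")
      case True
      have n16: "n \<ge> 16" using True by (simp add: N0_def)
      have nX: "real n \<ge> X0"
      proof -
        have "X0 \<le> real (nat \<lceil>X0\<rceil>)" by linarith
        also have "\<dots> \<le> real n"
        proof -
          have "nat \<lceil>X0\<rceil> \<le> n" using True unfolding N0_def by linarith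
          then show ?thesis by (rule of_nat_mono)
        qed
        finally show ?thesis .
      qed
      define k where "k = nat \<lfloor>log 16 (real n)\<rfloor>"
      have n3: "n \<ge> 3" using n16 by simp
      note num = numeric[OF n3 X0[OF nX], folded k_def]
      obtain A where A: "\<forall>X. X \<subseteq> {0..<n} \<longrightarrow> card X = k \<longrightarrow> (\<exists>u\<in>{0..<n} - X. \<forall>x\<in>X. bt A u x)"
        using tourn_exists[OF num(1) num(2)] by blast
      have "k + 1 \<le> G" unfolding G_def
        by (rule dom_lower[where b="bt A", OF r bt_anti num(1)]) (use A in blast)
      then have G1: "real k + 1 \<le> real G" by linarith
      have ln1: "ln (real n) \<ge> 1"
      proof -
        have "ln (16::real) \<le> ln (real n)" using n16 by simp
        then show ?thesis using ln16 by simp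
      qed
      have "ln (real n) powr a \<le> ln (real n) powr 1"
        using a ln1 by (intro powr_mono) auto
      then have pw: "ln (real n) powr a \<le> ln (real n)" using lnpos by simp
      have "c * ln (real n) powr a \<le> (1 / ln 16) * ln (real n)"
        by (rule mult_mono) (use pw lnpos in \<open>auto simp: c_def\<close>)
      also have "\<dots> < real k + 1" using num(3) by simp
      finally show ?thesis using G1 by simp
    next
      case False
      have "0 + 1 \<le> G" unfolding G_def
      proof (rule dom_lower[where b="bt {}", OF r bt_anti])
        show "0 \<le> n" by simp
        fix X :: "nat set" assume "X \<subseteq> {0..<n}" "card X = 0"
        then have "X = {}" by (meson card_0_eq finite_atLeastLessThan finite_subset)
        then show "\<exists>u\<in>{0..<n} - X. \<forall>x\<in>X. bt {} u x" using nr r by (auto intro!: exI[of _ 0])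
      qed
      then have G1: "1 \<le> real G" by simp
      have pw: "ln (real n) powr a \<le> real N0"
      proof (cases "ln (real n) \<le> 1")
        case True
        have "ln (real n) powr a \<le> 1 powr a"
          using True lnpos a by (intro powr_mono2) auto
        then show ?thesis using N0pos by (simp add: N0_def)
      next
        case F: False
        have "ln (real n) powr a \<le> ln (real n) powr 1"
          using a F by (intro powr_mono) auto
        also have "\<dots> = ln (real n)" using lnpos by simp
        also have "\<dots> \<le> real n" using nr r ln_le_minus_one[of "real n"] by simp
        also have "\<dots> \<le> real N0" using False by simp
        finally show ?thesis .
      qed
      have "c * ln (real n) powr a \<le> (1 / real N0) * real N0"
        by (rule mult_mono) (use pw in \<open>auto simp: c_def\<close>)
      also have "\<dots> = 1" using N0pos by simp
      finally show ?thesis using G1 by simp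
    qed
    then show "c * ln (real n) powr (1 / (real r - 1)) \<le> real (upper_dir_dom_number (r - 1) {0..<n} (complete_hyp_edges n r))"
      by (simp add: a_def G_def)
  qed
qed


end
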